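(* Let $P\in\mathrm{Sym}(n,\mathbb{R})$ be positive definite, $R\in\mathrm{Sym}(n,\mathbb{R})$, $Q\in\mathrm{Mat}(n,\mathbb{R})$, and for $\lambda\ge0$ let $B_\lambda=\begin{bmatrix}P^{-1}&-P^{-1}Q\\-Q^TP^{-1}&Q^TP^{-1}Q-R-\lambda I_n\end{bmatrix}$. Assume $JB_0$ is hyperbolic. Then for every $\lambda\ge0$ the spectral subspaces $V^+(JB_\lambda)$ and $V^-(JB_\lambda)$ are transversal to $L_D$, i.e. $V^\pm(JB_\lambda)\cap L_D=\{0\}$.
   Context: $J=\begin{bmatrix}0&-I_n\\ I_n&0\end{bmatrix}$; hyperbolic means no eigenvalue on the imaginary axis. $V^+(M)$ (resp. $V^-(M)$) is the real generalized eigenspace of $M$ for eigenvalues with positive (resp. negative) real part. $L_D=\mathbb{R}^n\times\{0\}\subset\mathbb{R}^{2n}$. *)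

theory Defs
  imports "HOL-Analysis.Analysis"
begin

text \<open>Vectors of R^(2n) are indexed by the type 'n + 'n: first block Inl, second block Inr.\<close>

definition block_mat ::
  "('a::zero)^'n^'n \<Rightarrow> 'a^'n^'n \<Rightarrow> 'a^'n^'n \<Rightarrow> 'a^'n^'n \<Rightarrow> 'a^('n+'n)^('n+'n)" where
  "block_mat A B C D = (\<chi> i j. case i of
      Inl a \<Rightarrow> (case j of Inl b \<Rightarrow> A$a$b | Inr b \<Rightarrow> B$a$b)
    | Inr a \<Rightarrow> (case j of Inl b \<Rightarrow> C$a$b | Inr b \<Rightarrow> D$a$b))"

definition Jmat :: "real^('n::finite+'n)^('n+'n)" where
  "Jmat = block_mat 0 (- mat 1) (mat 1) 0"

definition Bmat :: "real^'n^'n \<Rightarrow> real^'n^'n \<Rightarrow> real^'n^'n \<Rightarrow> real \<Rightarrow> real^('n::finite+'n)^('n+'n)" where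
  "Bmat P Q R lam = (let Pi = matrix_inv P in
     block_mat Pi (- (Pi ** Q)) (- (transpose Q ** Pi)) (transpose Q ** Pi ** Q - R - mat lam))"

definition cmat :: "real^'m^'m \<Rightarrow> complex^'m^'m" where
  "cmat M = (\<chi> i j. complex_of_real (M$i$j))"

definition cvec :: "real^'m \<Rightarrow> complex^'m" where
  "cvec v = (\<chi> i. complex_of_real (v$i))"

definition mpow :: "('a::comm_ring_1)^'m^'m \<Rightarrow> nat \<Rightarrow> 'a^'m^'m" where
  "mpow A k = (((**) A) ^^ k) (mat 1)"

definition is_eigenvalue :: "real^'m^'m \<Rightarrow> complex \<Rightarrow> bool" where
  "is_eigenvalue M \<mu> \<longleftrightarrow> (\<exists>v. v \<noteq> 0 \<and> cmat M *v v = \<mu> *s v)"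

definition hyperbolic :: "real^'m^'m \<Rightarrow> bool" where
  "hyperbolic M \<longleftrightarrow> (\<forall>\<mu>. is_eigenvalue M \<mu> \<longrightarrow> Re \<mu> \<noteq> 0)"

definition gen_eigenspace :: "real^'m^'m \<Rightarrow> complex \<Rightarrow> (complex^'m) set" where
  "gen_eigenspace M \<mu> = {w. \<exists>k. mpow (cmat M - mat \<mu>) k *v w = 0}"

text \<open>Real spectral subspace: real vectors lying in the sum of the complex generalized
  eigenspaces of eigenvalues mu with property S mu.\<close>
definition spec_subspace :: "(complex \<Rightarrow> bool) \<Rightarrow> real^'m^'m \<Rightarrow> (real^'m) set" where
  "spec_subspace S M = {v. \<exists>w :: complex \<Rightarrow> complex^'m.
      finite {\<mu>. w \<mu> \<noteq> 0} \<and>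
      (\<forall>\<mu>. w \<mu> \<noteq> 0 \<longrightarrow> S \<mu> \<and> w \<mu> \<in> gen_eigenspace M \<mu>) \<and>
      cvec v = (\<Sum>\<mu>\<in>{\<mu>. w \<mu> \<noteq> 0}. w \<mu>)}"

definition Vplus :: "real^'m^'m \<Rightarrow> (real^'m) set" where
  "Vplus M = spec_subspace (\<lambda>\<mu>. Re \<mu> > 0) M"

definition Vminus :: "real^'m^'m \<Rightarrow> (real^'m) set" where
  "Vminus M = spec_subspace (\<lambda>\<mu>. Re \<mu> < 0) M"

definition L_D :: "(real^('n::finite+'n)) set" where
  "L_D = {x. \<forall>i. x $ Inr i = 0}"

end

theory Submission
  imports Defs
begin

definition cdot :: "complex^'m \<Rightarrow> complex^'m \<Rightarrow> complex" where
  "cdot w z = (\<Sum>i\<in>UNIV. w$i * z$i)"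

lemma cdot_transpose:
  fixes C :: "complex^'m^'m"
  shows "cdot (C *v w) y = cdot w (transpose C *v y)"
proof -
  have "cdot (C *v w) y = (\<Sum>i\<in>UNIV. \<Sum>j\<in>UNIV. C$i$j * w$j * y$i)"
    unfolding cdot_def matrix_vector_mult_def by (simp add: sum_distrib_right)
  also have "\<dots> = (\<Sum>j\<in>UNIV. \<Sum>i\<in>UNIV. C$i$j * w$j * y$i)"
    by (rule sum.swap)
  also have "\<dots> = cdot w (transpose C *v y)"
    unfolding cdot_def matrix_vector_mult_def transpose_def
    by (simp add: sum_distrib_left mult_ac)
  finally show ?thesis .
qed

lemma cdot_diff_left: "cdot (a - b) y = cdot a y - cdot b y"
  unfolding cdot_def by (simp add: left_diff_distrib sum_subtractf)

lemma cdot_diff_right: "cdot y (a - b) = cdot y a - cdot y b"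
  unfolding cdot_def by (simp add: right_diff_distrib sum_subtractf)

lemma cdot_smult_left: "cdot (c *s a) y = c * cdot a y"
  unfolding cdot_def by (simp add: sum_distrib_left mult_ac)

lemma cdot_smult_right: "cdot y (c *s a) = c * cdot y a"
  unfolding cdot_def by (simp add: sum_distrib_left mult_ac)

lemma cdot_neg_right: "cdot y (- a) = - cdot y a"
  unfolding cdot_def by (simp add: sum_negf)

lemma cdot_zero_left[simp]: "cdot 0 y = 0"
  unfolding cdot_def by simp

lemma cdot_zero_right[simp]: "cdot y 0 = 0"
  unfolding cdot_def by simp

lemma cdot_sum_left: "cdot (sum f S) y = (\<Sum>s\<in>S. cdot (f s) y)"
  unfolding cdot_def by (induction S rule: infinite_finite_induct) (auto simp: sum.distrib distrib_right)

lemma cdot_sum_right: "cdot y (sum f S) = (\<Sum>s\<in>S. cdot y (f s))"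
  unfolding cdot_def by (induction S rule: infinite_finite_induct) (auto simp: sum.distrib distrib_left)

lemma mat_mulv: "mat (c::'a::comm_semiring_1) *v w = c *s w"
  by (simp add: vec_eq_iff matrix_vector_mult_def mat_def if_distrib if_distribR cong: if_cong)

lemma mpow_Suc': "mpow A (Suc k) = mpow A k ** A"
proof (induction k)
  case 0 then show ?case by (simp add: mpow_def)
next
  case (Suc k)
  have "mpow A (Suc (Suc k)) = A ** mpow A (Suc k)" by (simp add: mpow_def)
  also have "\<dots> = A ** (mpow A k ** A)" using Suc by simp
  also have "\<dots> = (A ** mpow A k) ** A" by (simp add: matrix_mul_assoc)
  also have "\<dots> = mpow A (Suc k) ** A" by (simp add: mpow_def)
  finally show ?case .
qed

lemma mpow_Suc_v: "mpow A (Suc k) *v w = mpow A k *v (A *v w)"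
  by (simp add: mpow_Suc' matrix_vector_mul_assoc)

lemma mpow_0_v: "mpow A 0 *v w = w"
  by (simp add: mpow_def)

lemma matrix_vector_mult_neg: "(- A) *v (x::'a::ring_1^'n) = - (A *v x)"
  by (simp add: vec_eq_iff matrix_vector_mult_def sum_negf)

lemma matrix_vector_mult_smult: "A *v (c *s (x::'a::comm_ring_1^'n)) = c *s (A *v x)"
  by (simp add: vec_eq_iff matrix_vector_mult_def sum_distrib_left mult_ac)

lemma key_step:
  fixes C Bc :: "complex^'m^'m"
  assumes HB: "transpose C ** Bc = - (Bc ** C)"
  shows "cdot ((C - mat \<mu>) *v w) (Bc *v z)
       = - cdot w (Bc *v ((C - mat \<nu>) *v z)) - (\<mu> + \<nu>) * cdot w (Bc *v z)"
proof -
  have e1: "cdot ((C - mat \<mu>) *v w) (Bc *v z) = cdot (C *v w) (Bc *v z) - \<mu> * cdot w (Bc *v z)"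
    by (simp add: matrix_vector_mult_diff_rdistrib mat_mulv cdot_diff_left cdot_smult_left)
  have e2: "cdot (C *v w) (Bc *v z) = - cdot w (Bc *v (C *v z))"
    by (simp add: cdot_transpose matrix_vector_mul_assoc HB matrix_vector_mult_neg cdot_neg_right)
  have e3: "cdot w (Bc *v ((C - mat \<nu>) *v z)) = cdot w (Bc *v (C *v z)) - \<nu> * cdot w (Bc *v z)"
    by (simp add: matrix_vector_mult_diff_rdistrib matrix_vector_mult_diff_distrib mat_mulv
        cdot_diff_right cdot_smult_right matrix_vector_mult_smult)
  show ?thesis unfolding e1 e2 e3 by (simp add: algebra_simps)
qed

lemma gen_orth:
  fixes C Bc :: "complex^'m^'m"
  assumes HB: "transpose C ** Bc = - (Bc ** C)" and ne: "\<mu> + \<nu> \<noteq> 0"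
  shows "mpow (C - mat \<mu>) k *v w = 0 \<Longrightarrow> mpow (C - mat \<nu>) l *v z = 0 \<Longrightarrow> cdot w (Bc *v z) = 0"
proof (induction k arbitrary: w z l)
  case 0 then show ?case by (simp add: mpow_0_v)
next
  case (Suc k)
  have IH: "\<And>z l. mpow (C - mat \<nu>) l *v z = 0 \<Longrightarrow> cdot ((C - mat \<mu>) *v w) (Bc *v z) = 0"
    using Suc.IH Suc.prems(1) by (simp add: mpow_Suc_v)
  have "mpow (C - mat \<nu>) l *v z = 0 \<Longrightarrow> cdot w (Bc *v z) = 0" for l z
  proof (induction l arbitrary: z)
    case 0 then show ?case by (simp add: mpow_0_v)
  next
    case (Suc l)
    have h1: "cdot w (Bc *v ((C - mat \<nu>) *v z)) = 0" using Suc.IH Suc.prems by (simp add: mpow_Suc_v)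
    have h2: "cdot ((C - mat \<mu>) *v w) (Bc *v z) = 0" using IH Suc.prems by blast
    from key_step[OF HB, of \<mu> w z \<nu>] h1 h2 have "(\<mu>+\<nu>) * cdot w (Bc *v z) = 0" by simp
    then show ?case using ne by simp
  qed
  then show ?case using Suc.prems(2) by blast
qed

lemma cmat_transpose: "cmat (transpose A) = transpose (cmat A)"
  by (simp add: vec_eq_iff cmat_def transpose_def)

lemma cmat_mult: "cmat (A ** B) = cmat A ** cmat B"
  by (simp add: vec_eq_iff cmat_def matrix_matrix_mult_def)

lemma cmat_neg: "cmat (- A) = - cmat A"
  by (simp add: vec_eq_iff cmat_def)

lemma cmat_cvec: "cmat A *v cvec v = cvec (A *v v)"
  by (simp add: vec_eq_iff cmat_def cvec_def matrix_vector_mult_def)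

lemma matrix_vector_sum: "A *v sum f S = (\<Sum>s\<in>S. A *v f s)"
  by (induction S rule: infinite_finite_induct) (auto simp: matrix_vector_right_distrib)

lemma spec_isotropic:
  fixes M Bm :: "real^'m^'m"
  assumes HB: "transpose M ** Bm = - (Bm ** M)"
    and SS: "\<forall>\<mu> \<nu>. S \<mu> \<longrightarrow> S \<nu> \<longrightarrow> \<mu> + \<nu> \<noteq> 0"
    and v: "v \<in> spec_subspace S M"
  shows "(\<Sum>i\<in>UNIV. v$i * (Bm *v v)$i) = 0"
proof -
  obtain w where wp: "\<forall>\<mu>. w \<mu> \<noteq> 0 \<longrightarrow> S \<mu> \<and> w \<mu> \<in> gen_eigenspace M \<mu>"
     and vs: "cvec v = (\<Sum>\<mu>\<in>{\<mu>. w \<mu> \<noteq> 0}. w \<mu>)"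
    using v unfolding spec_subspace_def by blast
  have HBc: "transpose (cmat M) ** cmat Bm = - (cmat Bm ** cmat M)"
    using arg_cong[OF HB, of cmat] by (simp add: cmat_mult cmat_neg cmat_transpose)
  have orth: "cdot (w \<mu>) (cmat Bm *v w \<nu>) = 0" if "w \<mu> \<noteq> 0" "w \<nu> \<noteq> 0" for \<mu> \<nu>
  proof -
    from wp that obtain k l where "mpow (cmat M - mat \<mu>) k *v w \<mu> = 0"
      "mpow (cmat M - mat \<nu>) l *v w \<nu> = 0" "S \<mu>" "S \<nu>"
      unfolding gen_eigenspace_def by blast
    then show ?thesis using gen_orth[OF HBc, of \<mu> \<nu>] SS by blast
  qed
  have "cdot (cvec v) (cmat Bm *v cvec v) = 0"
    unfolding vs cdot_sum_left matrix_vector_sum cdot_sum_right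
    using orth by simp
  moreover have "cdot (cvec v) (cmat Bm *v cvec v) = complex_of_real (\<Sum>i\<in>UNIV. v$i * (Bm *v v)$i)"
    unfolding cmat_cvec cdot_def by (simp add: cvec_def of_real_sum)
  ultimately show ?thesis by (metis of_real_eq_0_iff)
qed


lemma sum_UNIV_Plus:
  "(\<Sum>i\<in>(UNIV::('a::finite + 'b::finite) set). f i) = (\<Sum>a\<in>UNIV. f (Inl a)) + (\<Sum>b\<in>UNIV. f (Inr b))"
  using sum.Plus[of "UNIV::'a set" "UNIV::'b set" f] by (simp add: comp_def)

lemma block_transpose:
  "transpose (block_mat A B C D) = block_mat (transpose A) (transpose C) (transpose B) (transpose D)"
  by (simp add: vec_eq_iff transpose_def block_mat_def split: sum.split)

lemma transpose_neg: "transpose (- (A::'a::ring_1^'n^'m)) = - transpose A"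
  by (simp add: vec_eq_iff transpose_def)

lemma transpose_diff: "transpose ((A::'a::ring_1^'n^'m) - B) = transpose A - transpose B"
  by (simp add: vec_eq_iff transpose_def)

lemma matrix_mul_neg_right: "(A::'a::ring_1^'n^'m) ** (- B) = - (A ** B)"
  by (simp add: vec_eq_iff matrix_matrix_mult_def sum_negf)

lemma matrix_mul_neg_left: "(- A::'a::ring_1^'n^'m) ** B = - (A ** B)"
  by (simp add: vec_eq_iff matrix_matrix_mult_def sum_negf)

lemma Jmat_transpose: "transpose (Jmat::real^('n::finite+'n)^('n+'n)) = - Jmat"
  by (auto simp add: vec_eq_iff transpose_def Jmat_def block_mat_def mat_def split: sum.split)

lemma zero_in_spec: "0 \<in> spec_subspace S M"
  unfolding spec_subspace_def
  by (rule CollectI, rule exI[of _ "\<lambda>_. 0"]) (simp add: cvec_def vec_eq_iff)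

lemma transversal:
  fixes P Q R :: "real^'n::finite^'n"
  assumes Psym: "transpose P = P"
    and Ppos: "\<forall>x. x \<noteq> 0 \<longrightarrow> x \<bullet> (P *v x) > 0"
    and Rsym: "transpose R = R"
    and SS: "\<forall>\<mu> \<nu>. S \<mu> \<longrightarrow> S \<nu> \<longrightarrow> \<mu> + \<nu> \<noteq> 0"
  shows "spec_subspace S (Jmat ** Bmat P Q R lam) \<inter> L_D = {0}"
proof -
  define Pi where "Pi = matrix_inv P"
  have "\<forall>x. P *v x = 0 \<longrightarrow> x = 0" using Ppos by (metis inner_zero_right less_irrefl)
  then have "\<exists>B::real^'n^'n. B ** P = mat 1" by (simp add: matrix_left_invertible_ker)
  then have "invertible P" using invertible_left_inverse by blast
  then have PPi: "P ** Pi = mat 1 \<and> Pi ** P = mat 1"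
    using someI_ex[of "\<lambda>A'. P ** A' = mat 1 \<and> A' ** P = mat 1"]
    unfolding Pi_def matrix_inv_def invertible_def by blast
  have "transpose Pi ** P = mat 1"
    using arg_cong[OF conjunct1[OF PPi], of transpose] by (simp add: matrix_transpose_mul Psym)
  then have PiT: "transpose Pi = Pi"
    by (metis PPi matrix_mul_assoc matrix_mul_lid matrix_mul_rid)
  define B where "B = Bmat P Q R lam"
  have Bsym: "transpose B = B"
    unfolding B_def Bmat_def Let_def Pi_def[symmetric] block_transpose
    by (simp add: transpose_neg transpose_diff matrix_transpose_mul PiT Rsym matrix_mul_assoc)
  have HB: "transpose (Jmat ** B) ** B = - (B ** (Jmat ** B))"
    by (simp add: matrix_transpose_mul Bsym Jmat_transpose matrix_mul_neg_right
        matrix_mul_neg_left matrix_mul_assoc)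
  have "x = 0" if x: "x \<in> spec_subspace S (Jmat ** B)" "x \<in> L_D" for x
  proof -
    have s0: "(\<Sum>i\<in>UNIV. x$i * (B *v x)$i) = 0" using spec_isotropic[OF HB SS x(1)] .
    have xr: "x $ Inr b = 0" for b using x(2) unfolding L_D_def by simp
    define u where "u = (\<chi> a. x $ Inl a)"
    have Bx: "(B *v x) $ Inl a = (Pi *v u) $ a" for a
      unfolding B_def Bmat_def Let_def Pi_def[symmetric] matrix_vector_mult_def
      by (simp add: sum_UNIV_Plus xr u_def block_mat_def)
    have "u \<bullet> (Pi *v u) = 0"
      using s0 by (simp add: sum_UNIV_Plus xr Bx inner_vec_def u_def)
    define v where "v = Pi *v u"
    have uv: "u = P *v v" unfolding v_def by (simp add: matrix_vector_mul_assoc PPi)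
    have "u \<bullet> v = 0" unfolding v_def by fact
    then have "v \<bullet> (P *v v) = 0" using uv by (metis inner_commute)
    then have "v = 0" using Ppos by (metis less_irrefl)
    then have "u = 0" using uv by simp
    then have "x $ Inl a = 0" for a unfolding u_def by (simp add: vec_eq_iff)
    then have xl: "x $ Inl a = 0" for a .
    show "x = 0" unfolding vec_eq_iff
    proof
      fix i show "x $ i = 0 $ i" using xl xr by (cases i) simp_all
    qed
  qed
  moreover have "0 \<in> L_D" by (simp add: L_D_def)
  ultimately show ?thesis using zero_in_spec unfolding B_def by blast
qed

theorem lemma4p1:
  fixes P Q R :: "real^'n::finite^'n"
  assumes "transpose P = P"
    and "\<forall>x. x \<noteq> 0 \<longrightarrow> x \<bullet> (P *v x) > 0"
    and "transpose R = R"
    and "hyperbolic (Jmat ** Bmat P Q R 0)"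
    and "lam \<ge> 0"
  shows "Vplus (Jmat ** Bmat P Q R lam) \<inter> L_D = {0}
       \<and> Vminus (Jmat ** Bmat P Q R lam) \<inter> L_D = {0}"
proof -
  have p: "\<forall>\<mu> \<nu>. Re \<mu> > 0 \<longrightarrow> Re \<nu> > 0 \<longrightarrow> \<mu> + \<nu> \<noteq> 0"
  proof (intro allI impI notI)
    fix \<mu> \<nu> :: complex assume "Re \<mu> > 0" "Re \<nu> > 0" "\<mu> + \<nu> = 0"
    then have "Re (\<mu> + \<nu>) = 0" by simp
    then show False using \<open>Re \<mu> > 0\<close> \<open>Re \<nu> > 0\<close> by simp
  qed
  have m: "\<forall>\<mu> \<nu>. Re \<mu> < 0 \<longrightarrow> Re \<nu> < 0 \<longrightarrow> \<mu> + \<nu> \<noteq> 0"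
  proof (intro allI impI notI)
    fix \<mu> \<nu> :: complex assume "Re \<mu> < 0" "Re \<nu> < 0" "\<mu> + \<nu> = 0"
    then have "Re (\<mu> + \<nu>) = 0" by simp
    then show False using \<open>Re \<mu> < 0\<close> \<open>Re \<nu> < 0\<close> by simp
  qed
  show ?thesis unfolding Vplus_def Vminus_def
    using transversal[OF assms(1-3) p] transversal[OF assms(1-3) m] by blast
qed

end
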